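(* Let $(G,\cdot)$ be an abelian group of order $n\ge 2$ which is generated by $r$ elements, let $S$ be a set with $|S|=n$, and let $\mathcal{X}_G$ be the set of all binary operations $*:S\times S\to S$ such that $(S,* )$ is isomorphic to $(G,\cdot)$. Then any query-algorithm with respect to $\mathcal{X}_G$ which solves product-recovering satisfies, for $*$ uniformly distributed on $\mathcal{X}_G$, \[E(N)\ \ge\ n-\frac{n}{\ln n}+\frac12-r.\]
   Context: Let $S$ be a finite set and $\mathcal{X}$ a set of binary operations $*:S\times S\to S$. A query-algorithm with respect to $\mathcal{X}$ is a rooted tree $T$ in which every non-leaf node $v$ is labeled by a pair $(x_v,y_v)\in S^2$ (the query "$x_v*y_v$"), leaves are unlabeled, and every edge from $v$ to a child is labeled by an element of $S$ (a possible answer), distinct edges leaving the same node having distinct labels. It is required that for every $*\in\mathcal{X}$ there is a path $(v_0,\dots,v_k)$ from the root $v_0$ to a leaf $v_k$ such that for each $0\le i<k$ the edge $(v_i,v_{i+1})$ is labeled $x_{v_i}*y_{v_i}$. This leaf is uniquely determined and is denoted $L( * )$, giving a map $L:\mathcal{X}\to\{\text{leaves of }T\}$. The query-algorithm solves product-recovering if $L$ is a bijection. The number of queries used on $*$ is the depth $N( * )$ of $L( * )$; $E(N)$ denotes its expectation when $*$ is uniformly distributed on $\mathcal{X}$. *)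

theory Defs
  imports Complex_Main "HOL-Algebra.Algebra"
begin

text \<open>Query-algorithms over a finite ground type 'a (playing the role of S).
  A node asks the query x * y; its children are given by a partial map from
  answers to subtrees (distinct edges have distinct labels automatically).\<close>

datatype 'a qtree = Leaf | Node 'a 'a "'a \<Rightarrow> 'a qtree option"

text \<open>Leaves of a tree, identified by the sequence of edge labels from the root.\<close>
inductive leaf_path :: "'a qtree \<Rightarrow> 'a list \<Rightarrow> bool" where
  "leaf_path Leaf []"
| "ch a = Some t \<Longrightarrow> leaf_path t p \<Longrightarrow> leaf_path (Node u v ch) (a # p)"

inductive follows :: "'a qtree \<Rightarrow> ('a \<Rightarrow> 'a \<Rightarrow> 'a) \<Rightarrow> 'a list \<Rightarrow> bool" where
  "follows Leaf g []"
| "ch (g u v) = Some t \<Longrightarrow> follows t g p \<Longrightarrow> follows (Node u v ch) g (g u v # p)"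

definition query_algorithm :: "'a qtree \<Rightarrow> ('a \<Rightarrow> 'a \<Rightarrow> 'a) set \<Rightarrow> bool" where
  "query_algorithm Tr Ops \<longleftrightarrow> (\<forall>f\<in>Ops. \<exists>p. follows Tr f p)"

definition leafL :: "'a qtree \<Rightarrow> ('a \<Rightarrow> 'a \<Rightarrow> 'a) \<Rightarrow> 'a list" where
  "leafL Tr f = (THE p. follows Tr f p)"

definition solves_product_recovering :: "'a qtree \<Rightarrow> ('a \<Rightarrow> 'a \<Rightarrow> 'a) set \<Rightarrow> bool" where
  "solves_product_recovering Tr Ops \<longleftrightarrow>
     query_algorithm Tr Ops \<and> bij_betw (leafL Tr) Ops {p. leaf_path Tr p}"

definition num_queries :: "'a qtree \<Rightarrow> ('a \<Rightarrow> 'a \<Rightarrow> 'a) \<Rightarrow> nat" where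
  "num_queries Tr f = length (leafL Tr f)"

definition expected_queries :: "'a qtree \<Rightarrow> ('a \<Rightarrow> 'a \<Rightarrow> 'a) set \<Rightarrow> real" where
  "expected_queries Tr Ops = (\<Sum>f\<in>Ops. real (num_queries Tr f)) / real (card Ops)"

definition iso_ops :: "('b, 'c) monoid_scheme \<Rightarrow> ('a \<Rightarrow> 'a \<Rightarrow> 'a) set" where
  "iso_ops G = {f. \<exists>\<phi>. bij_betw \<phi> (UNIV :: 'a set) (carrier G) \<and>
                      (\<forall>x y. \<phi> (f x y) = \<phi> x \<otimes>\<^bsub>G\<^esub> \<phi> y)}"

end

theory Submission
  imports Defs "HOL-Combinatorics.Permutations"
begin

lemma poly1: fixes x::real assumes "x \<ge> 1" shows "(x+2)*(2*x*(x+1)) \<le> 1*(12*x^3)"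
proof -
  have a: "x \<le> x*x" using assms by (simp add: mult_le_cancel_left1)
  have b: "x*x \<le> x*x*x" using assms a mult_right_mono[OF a, of x] by simp 
  have "(x+2)*(2*x*(x+1)) = 2*(x*x*x) + 6*(x*x) + 4*x" by (simp add: algebra_simps)
  moreover have "12*x^3 = 12*(x*x*x)" by (simp add: power3_eq_cube)
  ultimately show ?thesis using a b by linarith
qed

lemma ln_cubic: fixes x::real assumes "0 \<le> x" shows "ln (1+x) \<le> x - x^2/2 + x^3/3"
proof -
  let ?F = "\<lambda>x::real. x - x^2/2 + x^3/3 - ln (1+x)"
  have "?F 0 \<le> ?F x"
  proof (rule DERIV_nonneg_imp_nondecreasing[OF assms])
    fix y :: real assume y: "0 \<le> y" "y \<le> x"
    have "DERIV ?F y :> 1 - y + y^2 - 1/(1+y)"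
      using y by (auto intro!: derivative_eq_intros simp: field_simps power2_eq_square)
    moreover have "0 \<le> 1 - y + y^2 - 1/(1+y)"
    proof -
      have "1 - y + y^2 - 1/(1+y) = y^3/(1+y)" using y by (simp add: field_simps power2_eq_square power3_eq_cube)
      thus ?thesis using y by simp
    qed
    ultimately show "\<exists>d. DERIV ?F y :> d \<and> 0 \<le> d" by blast
  qed
  thus ?thesis by simp
qed

lemma stirling_lb: "n \<ge> 1 \<Longrightarrow> ln (fact n :: real) \<ge> (real n + 1/2) * ln (real n) - real n + 1/(2*real n)"
proof (induction n rule: nat_induct_at_least)
  case base
  then show ?case by simp
next
  case (Suc n)
  have n: "real n \<ge> 1" using Suc by simp
  have l: "ln (real n + 1) - ln (real n) = ln (1 + 1/real n)"
    proof -
    have "1 + 1/real n = (real n + 1)/real n" using n by (simp add: field_simps)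
    thus ?thesis using n by (simp add: ln_div)
  qed
  have c: "ln (1 + 1/real n) \<le> 1/real n - (1/real n)^2/2 + (1/real n)^3/3"
    by (rule ln_cubic) simp
  have p: "(real n + 1/2) * (1/real n - (1/real n)^2/2 + (1/real n)^3/3) \<le> 1 + 1/(2*real n) - 1/(2*(real n+1))"
  proof -
    have "(real n + 1/2) * (1/real n - (1/real n)^2/2 + (1/real n)^3/3) = 1 + 1/(12*real n^2) + 1/(6*real n^3)"
      using n by (simp add: field_simps power2_eq_square power3_eq_cube)
    moreover have "1/(2*real n) - 1/(2*(real n+1)) = 1/(2*real n*(real n+1))"
      using n by (simp add: field_simps)
    moreover have "1/(12*real n^2) + 1/(6*real n^3) \<le> 1/(2*real n*(real n+1))"
    proof -
      have "1/(12*real n^2) + 1/(6*real n^3) = (real n + 2)/(12*real n^3)"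
        using n by (simp add: field_simps power2_eq_square power3_eq_cube)
      also have "\<dots> \<le> 1/(2*real n*(real n+1))"
        proof -
        have a: "(real n + 2) * (2*real n*(real n+1)) \<le> 1 * (12*real n^3)" by (rule poly1[OF n])
        have "0 < 12*real n^3" "0 < 2*real n*(real n+1)" using n by auto
        thus ?thesis using a by (simp only: frac_le_eq) (simp add: divide_le_eq)
      qed
      finally show ?thesis .
    qed
    ultimately show ?thesis by linarith
  qed
  have lp: "0 \<le> real n + 1/2" using n by simp
  have "(real n + 1/2) * ln (1 + 1/real n) \<le> (real n + 1/2) * (1/real n - (1/real n)^2/2 + (1/real n)^3/3)"
    by (rule mult_left_mono[OF c lp])
  moreover have "(real n + 1/2) * (ln (real n + 1) - ln (real n)) = (real n + 1/2) * ln (1 + 1/real n)"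
    by (simp only: l)
  ultimately have key: "(real n + 1/2) * (ln (real n + 1) - ln (real n)) \<le> 1 + 1/(2*real n) - 1/(2*(real n+1))"
    using p by linarith
  have "ln (fact (Suc n) :: real) = ln (real n + 1) + ln (fact n)"
    by (simp add: ln_mult add.commute)
  then show ?case using Suc.IH key
    by (simp add: algebra_simps)
qed

lemma leaf_path_Leaf: "leaf_path Leaf p \<longleftrightarrow> p = []"
  by (auto elim: leaf_path.cases intro: leaf_path.intros)

lemma leaf_path_Node: "leaf_path (Node u v ch) p \<longleftrightarrow> (\<exists>a q t. p = a # q \<and> ch a = Some t \<and> leaf_path t q)"
  by (auto elim: leaf_path.cases intro: leaf_path.intros)

lemma kraft:
  fixes t :: "('a::finite) qtree"
  assumes n: "card (UNIV :: 'a set) = n"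
  shows "finite {p. leaf_path t p} \<and> (\<Sum>p\<in>{p. leaf_path t p}. (1/real n)^length p) \<le> 1"
proof (induction t)
  case Leaf
  then show ?case by (simp add: leaf_path_Leaf)
next
  case (Node u v ch)
  define S where "S a = (case ch a of None \<Rightarrow> {} | Some t \<Rightarrow> {p. leaf_path t p})" for a
  have Sfin: "finite (S a)" and Ssum: "(\<Sum>q\<in>S a. (1/real n)^length q) \<le> 1" for a
    using Node[of "ch a"] by (auto simp: S_def split: option.splits)
  have eq: "{p. leaf_path (Node u v ch) p} = (\<lambda>(a,q). a # q) ` Sigma UNIV S"
    by (auto simp: leaf_path_Node S_def split: option.splits)
  have inj: "inj_on (\<lambda>(a,q). a # q) (Sigma UNIV S)" by (auto simp: inj_on_def)
  have fS: "finite (Sigma UNIV S)" using Sfin by auto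
  have npos: "real n > 0" using n card_gt_0_iff[of "UNIV::'a set"] by simp
  have "(\<Sum>p\<in>{p. leaf_path (Node u v ch) p}. (1/real n)^length p)
        = (\<Sum>(a,q)\<in>Sigma UNIV S. (1/real n)^length (a#q))"
    unfolding eq by (subst sum.reindex[OF inj]) (simp add: case_prod_unfold)
  also have "\<dots> = (\<Sum>a\<in>UNIV. \<Sum>q\<in>S a. (1/real n) * (1/real n)^length q)"
    by (subst sum.Sigma[symmetric]) (auto simp: Sfin)
  also have "\<dots> = (\<Sum>a\<in>UNIV. (1/real n) * (\<Sum>q\<in>S a. (1/real n)^length q))"
    by (simp add: sum_distrib_left)
  also have "\<dots> \<le> (\<Sum>a\<in>(UNIV::'a set). (1/real n) * 1)"
    by (rule sum_mono, rule mult_left_mono[OF Ssum]) (use npos in simp)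
  also have "\<dots> = 1" using n npos by simp
  finally show ?case using eq fS by simp
qed

lemma avg_bound:
  fixes A :: "'x set" and d :: "'x \<Rightarrow> nat" and q :: real
  assumes fin: "finite A" and ne: "A \<noteq> {}" and q: "q > 1"
    and kr: "(\<Sum>x\<in>A. (1/q)^(d x)) \<le> 1"
  shows "ln (real (card A)) / ln q \<le> (\<Sum>x\<in>A. real (d x)) / real (card A)"
proof -
  define L where "L = ln q"
  define M where "M = real (card A)"
  define E where "E = (\<Sum>x\<in>A. real (d x)) / M"
  have L: "L > 0" using q by (simp add: L_def)
  have M: "M > 0" using fin ne by (simp add: M_def card_gt_0_iff)
  have pw: "(1/q)^k = exp (- real k * L)" for k
  proof -
    have "(1/q)^k = exp (ln ((1/q)^k))" using q by simp
    also have "ln ((1/q)^k) = - real k * L" using q by (simp add: ln_realpow L_def ln_div)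
    finally show ?thesis .
  qed
  have tang: "exp (- E * L) * (1 - (real (d x) - E) * L) \<le> (1/q)^(d x)" for x
  proof -
    have "exp (- E * L) * (1 - (real (d x) - E) * L) \<le> exp (- E * L) * exp (- (real (d x) - E) * L)"
      proof (rule mult_left_mono)
      have f1: "1 + ((E - real (d x)) * L) \<le> exp ((E - real (d x)) * L)" by (rule exp_ge_add_one_self)
      have e2: "1 - (real (d x) - E) * L = 1 + ((E - real (d x)) * L)" by (simp add: algebra_simps)
      have e3: "- (real (d x) - E) * L = (E - real (d x)) * L" by (simp add: algebra_simps)
      show "1 - (real (d x) - E) * L \<le> exp (- (real (d x) - E) * L)" unfolding e2 e3 by (rule f1)
    qed simp
    also have "\<dots> = exp (- real (d x) * L)" by (simp add: exp_add[symmetric] algebra_simps)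
    finally show ?thesis by (simp add: pw)
  qed
  have "(\<Sum>x\<in>A. exp (- E * L) * (1 - (real (d x) - E) * L)) = exp (- E * L) * (M - L * ((\<Sum>x\<in>A. real (d x)) - M * E))"
    by (simp add: sum_distrib_left sum_subtractf M_def algebra_simps sum_distrib_right[symmetric])
  also have "(\<Sum>x\<in>A. real (d x)) - M * E = 0" using M by (simp add: E_def)
  finally have "exp (- E * L) * M \<le> 1"
    using sum_mono[of A "\<lambda>x. exp (- E * L) * (1 - (real (d x) - E) * L)" "\<lambda>x. (1/q)^(d x)", OF tang] kr
    by simp
  hence "ln (exp (- E * L) * M) \<le> 0" using M by simp
  hence "ln M \<le> E * L" using M by (simp add: ln_mult)
  hence "ln M / L \<le> E" using L by (simp add: divide_le_eq)
  thus ?thesis by (simp add: L_def M_def E_def)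
qed

lemma (in group) hom_op_facts:
  fixes f :: "'s \<Rightarrow> 's \<Rightarrow> 's" and \<psi>0 \<psi> :: "'s \<Rightarrow> 'a"
  assumes b0: "bij_betw \<psi>0 UNIV (carrier G)" and b: "bij_betw \<psi> UNIV (carrier G)"
    and h0: "\<forall>x y. \<psi>0 (f x y) = \<psi>0 x \<otimes> \<psi>0 y" and h: "\<forall>x y. \<psi> (f x y) = \<psi> x \<otimes> \<psi> y"
  shows "\<And>g h. g \<in> carrier G \<Longrightarrow> h \<in> carrier G \<Longrightarrow>
           \<psi> (inv_into UNIV \<psi>0 (g \<otimes> h)) = \<psi> (inv_into UNIV \<psi>0 g) \<otimes> \<psi> (inv_into UNIV \<psi>0 h)"
    and "\<psi> (inv_into UNIV \<psi>0 \<one>) = \<one>"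
    and "\<And>g. g \<in> carrier G \<Longrightarrow> \<psi> (inv_into UNIV \<psi>0 (inv g)) = inv (\<psi> (inv_into UNIV \<psi>0 g))"
proof -
  define I where "I = inv_into UNIV \<psi>0"
  have r: "\<psi>0 (I g) = g" if "g \<in> carrier G" for g
    using b0 that by (simp add: I_def bij_betw_inv_into_right)
  have inj0: "inj \<psi>0" using b0 by (simp add: bij_betw_def)
  have car: "\<psi> x \<in> carrier G" for x using b by (auto simp: bij_betw_def)
  have fI: "f (I g) (I h) = I (g \<otimes> h)" if "g \<in> carrier G" "h \<in> carrier G" for g h
    using that r h0 inj0 by (metis injD m_closed)
  show mul: "\<psi> (inv_into UNIV \<psi>0 (g \<otimes> h)) = \<psi> (inv_into UNIV \<psi>0 g) \<otimes> \<psi> (inv_into UNIV \<psi>0 h)"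
    if "g \<in> carrier G" "h \<in> carrier G" for g h
    using fI[OF that] h unfolding I_def by metis
  have "\<psi> (I \<one>) = \<psi> (I \<one>) \<otimes> \<psi> (I \<one>)"
    using mul[of \<one> \<one>] by (simp add: I_def)
  hence "\<psi> (I \<one>) \<otimes> \<psi> (I \<one>) = \<psi> (I \<one>) \<otimes> \<one>" using car by simp
  hence one: "\<psi> (I \<one>) = \<one>" using car by (metis l_cancel one_closed)
  thus "\<psi> (inv_into UNIV \<psi>0 \<one>) = \<one>" by (simp add: I_def)
  show "\<psi> (inv_into UNIV \<psi>0 (inv g)) = inv (\<psi> (inv_into UNIV \<psi>0 g))" if g: "g \<in> carrier G" for g
  proof -
    have "\<psi> (I g) \<otimes> \<psi> (I (inv g)) = \<one>"
      using mul[of g "inv g"] g one by (simp add: I_def)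
    hence "\<psi> (I (inv g)) \<otimes> \<psi> (I g) = \<one>" using car by (simp add: inv_comm)
    hence "inv (\<psi> (I g)) = \<psi> (I (inv g))" using car by (simp add: inv_equality)
    thus ?thesis unfolding I_def by simp
  qed
qed

lemma (in group) hom_ops_unique:
  fixes f :: "'s \<Rightarrow> 's \<Rightarrow> 's" and \<psi>0 \<psi>1 \<psi>2 :: "'s \<Rightarrow> 'a"
  assumes b0: "bij_betw \<psi>0 UNIV (carrier G)" and b1: "bij_betw \<psi>1 UNIV (carrier G)"
    and b2: "bij_betw \<psi>2 UNIV (carrier G)"
    and h0: "\<forall>x y. \<psi>0 (f x y) = \<psi>0 x \<otimes> \<psi>0 y" and h1: "\<forall>x y. \<psi>1 (f x y) = \<psi>1 x \<otimes> \<psi>1 y"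
    and h2: "\<forall>x y. \<psi>2 (f x y) = \<psi>2 x \<otimes> \<psi>2 y"
    and H: "H \<subseteq> carrier G" and gen: "generate G H = carrier G"
    and eq: "\<forall>g\<in>H. \<psi>1 (inv_into UNIV \<psi>0 g) = \<psi>2 (inv_into UNIV \<psi>0 g)"
  shows "\<psi>1 = \<psi>2"
proof -
  note F1 = hom_op_facts[OF b0 b1 h0 h1] and F2 = hom_op_facts[OF b0 b2 h0 h2]
  have P: "\<psi>1 (inv_into UNIV \<psi>0 g) = \<psi>2 (inv_into UNIV \<psi>0 g)" if "g \<in> generate G H" for g
    using that
  proof (induction rule: generate.induct)
    case one
    then show ?case using F1(2) F2(2) by simp
  next
    case (incl h)
    then show ?case using eq by simp
  next
    case (inv h)
    then have "h \<in> carrier G" using H by auto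
    then show ?case using F1(3) F2(3) inv eq by simp
  next
    case (eng h1 h2)
    then have "h1 \<in> carrier G" "h2 \<in> carrier G" using generate_in_carrier[OF H] by auto
    then show ?case using F1(1) F2(1) eng by simp
  qed
  show ?thesis
  proof
    fix x
    have "\<psi>0 x \<in> generate G H" using b0 gen by (auto simp: bij_betw_def)
    moreover have "inv_into UNIV \<psi>0 (\<psi>0 x) = x" using b0 by (simp add: bij_betw_def inv_into_f_f)
    ultimately show "\<psi>1 x = \<psi>2 x" using P by metis
  qed
qed

lemma count_ops:
  fixes G :: "('b, 'c) monoid_scheme" and gs :: "'b list"
  assumes grp: "group G" and fin: "finite (carrier G)"
    and card: "card (UNIV :: ('a::finite) set) = card (carrier G)"
    and gsc: "set gs \<subseteq> carrier G" and gen: "generate G (set gs) = carrier G"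
  shows "fact (card (carrier G)) \<le> card (iso_ops G :: ('a \<Rightarrow> 'a \<Rightarrow> 'a) set) * card (carrier G) ^ length gs"
proof -
  obtain \<phi>0 :: "'a \<Rightarrow> 'b" where b0: "bij_betw \<phi>0 UNIV (carrier G)"
    using finite_same_card_bij[OF finite_UNIV fin card] by blast
  define hom where "hom \<psi> f \<longleftrightarrow> bij_betw \<psi> (UNIV::'a set) (carrier G) \<and> (\<forall>x y. \<psi> (f x y) = \<psi> x \<otimes>\<^bsub>G\<^esub> \<psi> y)"
    for \<psi> :: "'a \<Rightarrow> 'b" and f :: "'a \<Rightarrow> 'a \<Rightarrow> 'a"
  define fop where "fop \<psi> = (\<lambda>x y. inv_into UNIV \<psi> (\<psi> x \<otimes>\<^bsub>G\<^esub> \<psi> y))" for \<psi> :: "'a \<Rightarrow> 'b"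
  define base where "base f = (SOME \<psi>. hom \<psi> f)" for f
  define key where "key \<psi> = map (\<lambda>g. \<psi> (inv_into UNIV (base (fop \<psi>)) g)) gs" for \<psi>
  define K where "K \<sigma> = (fop (\<phi>0 \<circ> \<sigma>), key (\<phi>0 \<circ> \<sigma>))" for \<sigma>
  define P where "P = {\<sigma>::'a \<Rightarrow> 'a. \<sigma> permutes UNIV}"
  have homfop: "hom \<psi> (fop \<psi>)" if "bij_betw \<psi> UNIV (carrier G)" for \<psi>
  proof -
    have "\<psi> x \<in> carrier G" for x using that by (auto simp: bij_betw_def)
    hence "\<psi> x \<otimes>\<^bsub>G\<^esub> \<psi> y \<in> carrier G" for x y using group.is_monoid[OF grp] by (simp add: monoid.m_closed)
    thus ?thesis using that by (simp add: hom_def fop_def bij_betw_inv_into_right)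
  qed
  have fop_iso: "fop \<psi> \<in> iso_ops G" if "bij_betw \<psi> UNIV (carrier G)" for \<psi>
    using homfop[OF that] unfolding hom_def iso_ops_def by blast
  have bijP: "bij_betw (\<phi>0 \<circ> \<sigma>) UNIV (carrier G)" if "\<sigma> \<in> P" for \<sigma>
    using that b0 by (auto simp: P_def intro: bij_betw_trans permutes_imp_bij)
  have fop_eq: "f = fop \<psi>" if "hom \<psi> f" for \<psi> f
  proof -
    have "inj \<psi>" using that by (simp add: hom_def bij_betw_def)
    thus ?thesis using that unfolding hom_def fop_def by (metis inv_into_f_f UNIV_I)
  qed
  have inj: "inj_on K P"
  proof
    fix \<sigma>1 \<sigma>2 assume s: "\<sigma>1 \<in> P" "\<sigma>2 \<in> P" and KK: "K \<sigma>1 = K \<sigma>2"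
    define \<psi>1 where "\<psi>1 = \<phi>0 \<circ> \<sigma>1"
    define \<psi>2 where "\<psi>2 = \<phi>0 \<circ> \<sigma>2"
    define f where "f = fop \<psi>1"
    have hm1: "hom \<psi>1 f" using homfop bijP[OF s(1)] by (simp add: f_def \<psi>1_def)
    have f2: "fop \<psi>2 = f" using KK by (simp add: K_def f_def \<psi>1_def \<psi>2_def)
    have hm2: "hom \<psi>2 f" using homfop[OF bijP[OF s(2)]] f2 by (simp add: \<psi>2_def)
    have hm0: "hom (base f) f" unfolding base_def using hm1 by (rule someI[where P="\<lambda>\<psi>. hom \<psi> f"])
    have "key \<psi>1 = key \<psi>2" using KK by (simp add: K_def \<psi>1_def \<psi>2_def)
    hence eq: "\<forall>g\<in>set gs. \<psi>1 (inv_into UNIV (base f) g) = \<psi>2 (inv_into UNIV (base f) g)"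
      unfolding key_def using f2 by (simp add: f_def)
    have "\<psi>1 = \<psi>2"
      using group.hom_ops_unique[OF grp _ _ _ _ _ _ gsc gen eq] hm0 hm1 hm2 unfolding hom_def by blast
    hence "\<phi>0 \<circ> \<sigma>1 = \<phi>0 \<circ> \<sigma>2" by (simp add: \<psi>1_def \<psi>2_def)
    moreover have "inj \<phi>0" using b0 by (simp add: bij_betw_def)
    ultimately show "\<sigma>1 = \<sigma>2" by (metis fun.inj_map_strong inj_eq)
  qed
  define Ls where "Ls = {xs. set xs \<subseteq> carrier G \<and> length xs = length gs}"
  have sub: "K ` P \<subseteq> (iso_ops G :: ('a \<Rightarrow> 'a \<Rightarrow> 'a) set) \<times> Ls"
  proof
    fix z assume "z \<in> K ` P"
    then obtain \<sigma> where s: "\<sigma> \<in> P" and z: "z = K \<sigma>" by blast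
    have "(\<phi>0 \<circ> \<sigma>) x \<in> carrier G" for x using bijP[OF s] by (auto simp: bij_betw_def)
    hence "set (key (\<phi>0 \<circ> \<sigma>)) \<subseteq> carrier G" unfolding key_def by auto
    thus "z \<in> iso_ops G \<times> Ls" using fop_iso[OF bijP[OF s]] by (simp add: z K_def Ls_def key_def)
  qed
  have finB: "finite ((iso_ops G :: ('a \<Rightarrow> 'a \<Rightarrow> 'a) set) \<times> Ls)"
  proof (rule finite_cartesian_product)
    show "finite (iso_ops G :: ('a \<Rightarrow> 'a \<Rightarrow> 'a) set)" by simp
    show "finite Ls" unfolding Ls_def by (rule finite_lists_length_eq[OF fin])
  qed
  have "card P \<le> card ((iso_ops G :: ('a \<Rightarrow> 'a \<Rightarrow> 'a) set) \<times> Ls)" by (rule card_inj_on_le[OF inj sub finB])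
  also have "\<dots> = card (iso_ops G :: ('a \<Rightarrow> 'a \<Rightarrow> 'a) set) * card (carrier G) ^ length gs"
    by (simp add: card_cartesian_product Ls_def card_lists_length_eq fin)
  finally show ?thesis using card_permutations[OF card finite_UNIV] by (simp add: P_def)
qed


theorem mainTheorem4:
  fixes G :: "('b, 'c) monoid_scheme"
    and T :: "('a::finite) qtree"
    and n r :: nat
  assumes "comm_group G"
    and "finite (carrier G)"
    and "order G = n"
    and "n \<ge> 2"
    and "\<exists>gs. length gs = r \<and> set gs \<subseteq> carrier G \<and> generate G (set gs) = carrier G"
    and "card (UNIV :: 'a set) = n"
    and "solves_product_recovering T (iso_ops G :: ('a \<Rightarrow> 'a \<Rightarrow> 'a) set)"
  shows "expected_queries T (iso_ops G) \<ge> real n - real n / ln (real n) + 1/2 - real r"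
proof -
  obtain gs where gs: "length gs = r" "set gs \<subseteq> carrier G" "generate G (set gs) = carrier G"
    using assms(5) by blast
  have grp: "group G" using assms(1) by (simp add: comm_group_def)
  have cG: "card (carrier G) = n" using assms(3) by (simp add: order_def)
  define Ops where "Ops = (iso_ops G :: ('a \<Rightarrow> 'a \<Rightarrow> 'a) set)"
  define M where "M = card Ops"
  have cnt: "fact n \<le> M * n ^ r"
    using count_ops[OF grp assms(2), where 'a='a] assms(6) cG gs unfolding M_def Ops_def by metis
  have finO: "finite Ops" by simp
  have M1: "M \<ge> 1"
  proof (rule ccontr)
    assume "\<not> M \<ge> 1" hence "M = 0" by simp
    thus False using cnt by simp
  qed
  hence neO: "Ops \<noteq> {}" using finO unfolding M_def by auto
  have bij: "bij_betw (leafL T) Ops {p. leaf_path T p}"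
    using assms(7) by (simp add: solves_product_recovering_def Ops_def)
  have kr: "(\<Sum>p\<in>{p. leaf_path T p}. (1/real n)^length p) \<le> 1"
    using kraft[OF assms(6)] by blast
  have "(\<Sum>f\<in>Ops. (1/real n)^(num_queries T f)) = (\<Sum>p\<in>{p. leaf_path T p}. (1/real n)^length p)"
    unfolding num_queries_def by (rule sum.reindex_bij_betw[OF bij, where g="\<lambda>p. (1/real n)^length p"])
  with kr have kr2: "(\<Sum>f\<in>Ops. (1/real n)^(num_queries T f)) \<le> 1" by simp
  have n2: "real n \<ge> 2" using assms(4) by simp
  have avg: "ln (real M) / ln (real n) \<le> expected_queries T Ops"
    using avg_bound[OF finO neO _ kr2] n2 unfolding expected_queries_def M_def by simp
  define L where "L = ln (real n)"
  have L: "L > 0" using n2 by (simp add: L_def)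
  have "ln (fact n :: real) \<le> ln (real M * real n ^ r)"
  proof -
    have "(fact n :: real) \<le> real (M * n ^ r)" using cnt by (metis of_nat_fact of_nat_le_iff)
    thus ?thesis by (simp add: ln_mono)
  qed
  also have "\<dots> = ln (real M) + real r * L"
    using M1 n2 by (simp add: ln_mult ln_realpow L_def)
  finally have lM: "ln (fact n :: real) - real r * L \<le> ln (real M)" by simp
  have st: "(real n + 1/2) * L - real n \<le> ln (fact n :: real)"
  proof -
    have "0 \<le> 1/(2*real n)" by simp
    thus ?thesis using stirling_lb[of n] assms(4) unfolding L_def by linarith
  qed
  have "(real n + 1/2) - real n / L - real r = ((real n + 1/2) * L - real n - real r * L) / L"
    using L by (simp add: field_simps)
  also have "\<dots> \<le> ln (real M) / L"
    using st lM L by (intro divide_right_mono) auto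
  finally have "(real n + 1/2) - real n / L - real r \<le> expected_queries T Ops"
    using avg unfolding L_def by linarith
  thus ?thesis unfolding L_def Ops_def by simp
qed

end
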